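(* Let $n\ge2$, $\beta\ge0$, $\alpha>-1$ with $\alpha<\beta-\frac12$. Then there is a constant $C$ depending only on $n,\alpha,\beta$ such that for all $0<\delta<\frac12$, $$\int_0^1\!\!\int_0^1\!\!\int_0^1\frac{s_1^\alpha\,t^{2n-3}\,ds_1\,ds_2\,dt}{(\delta+s_1+s_2+t^2)^{2+\beta}(\delta+s_1+s_2+t)^{2n-3}}\le C\,\delta^{\alpha-\beta+\frac12}.$$ *)

theory Defs
  imports "HOL-Analysis.Analysis"
begin

end

theory Submission
  imports Defs
begin

lemma int_from0:
  fixes p x :: real assumes "p > -1" "x \<ge> 0"
  shows "(\<integral>\<^sup>+ s. ennreal (indicator {0..x} s * s powr p) \<partial>lborel) = ennreal (x powr (p+1) / (p+1))"
  using nn_integral_has_integral_lebesgue[OF _ has_integral_powr_from_0[OF assms]]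
  by simp

lemma int_toinf:
  fixes q x :: real assumes "q < -1" "x > 0"
  shows "(\<integral>\<^sup>+ s. ennreal (indicator {x..} s * s powr q) \<partial>lborel) = ennreal (- (x powr (q+1)) / (q+1))"
  using nn_integral_has_integral_lebesgue[OF _ has_integral_powr_to_inf[OF assms]]
  by simp

lemma int_const:
  fixes c x :: real assumes "c \<ge> 0" "x \<ge> 0"
  shows "(\<integral>\<^sup>+ s. ennreal (indicator {0..x} s * c) \<partial>lborel) = ennreal (c * x)"
proof -
  have "(\<integral>\<^sup>+ s. ennreal (indicator {0..x} s * c) \<partial>lborel) = (\<integral>\<^sup>+ s. ennreal c * indicator {0..x} s \<partial>lborel)"
    by (intro nn_integral_cong) (auto simp: indicator_def)
  also have "\<dots> = ennreal c * emeasure lborel {0..x}" by (simp add: nn_integral_cmult_indicator)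
  also have "\<dots> = ennreal (c * x)" using assms by (simp add: ennreal_mult)
  finally show ?thesis .
qed

lemma prod3:
  fixes G1 G2 G3 :: "real \<Rightarrow> ennreal"
  assumes [measurable]: "G1 \<in> borel_measurable borel" "G2 \<in> borel_measurable borel" "G3 \<in> borel_measurable borel"
  shows "(\<integral>\<^sup>+x. (case x of (a,b,c) \<Rightarrow> G1 a * G2 b * G3 c) \<partial>(lborel::(real\<times>real\<times>real) measure))
     = (\<integral>\<^sup>+a. G1 a \<partial>lborel) * (\<integral>\<^sup>+b. G2 b \<partial>lborel) * (\<integral>\<^sup>+c. G3 c \<partial>lborel)"
proof -
  have inner: "(\<integral>\<^sup>+y. (case y of (b,c) \<Rightarrow> G2 b * G3 c) \<partial>(lborel::(real\<times>real) measure))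
     = (\<integral>\<^sup>+b. G2 b \<partial>lborel) * (\<integral>\<^sup>+c. G3 c \<partial>lborel)"
  proof -
    have "(\<integral>\<^sup>+y. (case y of (b,c) \<Rightarrow> G2 b * G3 c) \<partial>(lborel::(real\<times>real) measure))
      = (\<integral>\<^sup>+y. (case y of (b,c) \<Rightarrow> G2 b * G3 c) \<partial>(lborel \<Otimes>\<^sub>M lborel))"
      by (simp add: lborel_prod)
    also have "\<dots> = (\<integral>\<^sup>+b. \<integral>\<^sup>+c. G2 b * G3 c \<partial>lborel \<partial>lborel)"
      by (subst lborel.nn_integral_fst[symmetric]) auto
    also have "\<dots> = (\<integral>\<^sup>+b. G2 b * (\<integral>\<^sup>+c. G3 c \<partial>lborel) \<partial>lborel)"
      by (simp add: nn_integral_cmult)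
    also have "\<dots> = (\<integral>\<^sup>+b. G2 b \<partial>lborel) * (\<integral>\<^sup>+c. G3 c \<partial>lborel)"
      by (simp add: nn_integral_multc)
    finally show ?thesis .
  qed
  have "(\<integral>\<^sup>+x. (case x of (a,b,c) \<Rightarrow> G1 a * G2 b * G3 c) \<partial>(lborel::(real\<times>real\<times>real) measure))
      = (\<integral>\<^sup>+x. (case x of (a,b,c) \<Rightarrow> G1 a * G2 b * G3 c) \<partial>(lborel \<Otimes>\<^sub>M (lborel::(real\<times>real) measure)))"
    by (simp add: lborel_prod)
  also have "\<dots> = (\<integral>\<^sup>+a. \<integral>\<^sup>+y. G1 a * (case y of (b,c) \<Rightarrow> G2 b * G3 c) \<partial>lborel \<partial>lborel)"
  proof -
    have m: "(\<lambda>x. G1 (fst x) * (G2 (fst (snd x)) * G3 (snd (snd x)))) \<in> borel_measurable (lborel \<Otimes>\<^sub>M (lborel::(real\<times>real) measure))"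
      by (subst lborel_prod[symmetric, where ?'a=real and ?'b=real]) measurable
    show ?thesis
      by (subst lborel.nn_integral_fst[symmetric]) (auto simp: mult.assoc split_beta' m)
  qed
  also have "\<dots> = (\<integral>\<^sup>+a. G1 a * ((\<integral>\<^sup>+b. G2 b \<partial>lborel) * (\<integral>\<^sup>+c. G3 c \<partial>lborel)) \<partial>lborel)"
  proof -
    have m2: "(\<lambda>y. G2 (fst y) * G3 (snd y)) \<in> borel_measurable (lborel::(real\<times>real) measure)"
      by (subst lborel_prod[symmetric]) measurable
    show ?thesis using inner m2 by (simp add: split_beta' nn_integral_cmult)
  qed
  also have "\<dots> = (\<integral>\<^sup>+a. G1 a \<partial>lborel) * (\<integral>\<^sup>+b. G2 b \<partial>lborel) * (\<integral>\<^sup>+c. G3 c \<partial>lborel)"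
    by (simp add: nn_integral_multc mult.assoc)
  finally show ?thesis .
qed

lemma I1:
  fixes \<delta> \<alpha> a :: real
  assumes d: "\<delta> > 0" and al: "\<alpha> > -1" and aa: "a - \<alpha> - 1 > 0"
  shows "(\<integral>\<^sup>+ s. ennreal (indicator {0..\<delta>} s * s powr \<alpha> * \<delta> powr (-a) + indicator {\<delta>..} s * s powr (\<alpha> - a)) \<partial>lborel)
     = ennreal (\<delta> powr (\<alpha> + 1 - a) * (1/(\<alpha>+1) + 1/(a-\<alpha>-1)))"
proof -
  have "(\<integral>\<^sup>+ s. ennreal (indicator {0..\<delta>} s * s powr \<alpha> * \<delta> powr (-a) + indicator {\<delta>..} s * s powr (\<alpha> - a)) \<partial>lborel)
      = (\<integral>\<^sup>+ s. ennreal (indicator {0..\<delta>} s * s powr \<alpha>) * ennreal (\<delta> powr (-a)) + ennreal (indicator {\<delta>..} s * s powr (\<alpha> - a)) \<partial>lborel)"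
    by (intro nn_integral_cong) (simp add: ennreal_plus ennreal_mult)
  also have "\<dots> = (\<integral>\<^sup>+ s. ennreal (indicator {0..\<delta>} s * s powr \<alpha>) \<partial>lborel) * ennreal (\<delta> powr (-a))
      + (\<integral>\<^sup>+ s. ennreal (indicator {\<delta>..} s * s powr (\<alpha> - a)) \<partial>lborel)"
    by (simp add: nn_integral_add nn_integral_multc)
  also have "\<dots> = ennreal (\<delta> powr (\<alpha>+1) / (\<alpha>+1)) * ennreal (\<delta> powr (-a)) + ennreal (- (\<delta> powr ((\<alpha>-a)+1)) / ((\<alpha>-a)+1))"
    using d al aa by (simp add: int_from0 int_toinf)
  also have "\<dots> = ennreal (\<delta> powr (\<alpha>+1) / (\<alpha>+1) * \<delta> powr (-a) + (- (\<delta> powr ((\<alpha>-a)+1)) / ((\<alpha>-a)+1)))"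
  proof -
    have X: "0 \<le> \<delta> powr (\<alpha>+1)/(\<alpha>+1)" using al by simp
    have Z: "0 \<le> - (\<delta> powr ((\<alpha>-a)+1)) / ((\<alpha>-a)+1)" using aa by (intro divide_nonpos_neg) auto
    show ?thesis by (metis ennreal_mult ennreal_plus X Z powr_ge_zero mult_nonneg_nonneg)
  qed
  also have "\<delta> powr (\<alpha>+1) / (\<alpha>+1) * \<delta> powr (-a) + (- (\<delta> powr ((\<alpha>-a)+1)) / ((\<alpha>-a)+1))
      = \<delta> powr (\<alpha> + 1 - a) * (1/(\<alpha>+1) + 1/(a-\<alpha>-1))"
  proof -
    have "\<delta> powr (\<alpha>+1) * \<delta> powr (-a) = \<delta> powr (\<alpha> + 1 - a)" by (simp add: powr_add[symmetric])
    moreover have "\<delta> powr ((\<alpha>-a)+1) = \<delta> powr (\<alpha> + 1 - a)" by (simp add: algebra_simps)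
    moreover have "(\<alpha>-a)+1 = -(a-\<alpha>-1)" by simp
    ultimately show ?thesis using al aa by (simp add: divide_simps) (simp add: algebra_simps)
  qed
  finally show ?thesis .
qed

lemma J:
  fixes x K q :: real
  assumes x: "x > 0" and K: "K \<ge> 0" and q: "q < -1"
  shows "(\<integral>\<^sup>+ s. ennreal (indicator {0..x} s * K + indicator {x..} s * s powr q) \<partial>lborel)
     = ennreal (K * x + - (x powr (q+1)) / (q+1))"
proof -
  have "(\<integral>\<^sup>+ s. ennreal (indicator {0..x} s * K + indicator {x..} s * s powr q) \<partial>lborel)
      = (\<integral>\<^sup>+ s. ennreal (indicator {0..x} s * K) + ennreal (indicator {x..} s * s powr q) \<partial>lborel)"
    using K by (intro nn_integral_cong) (simp add: ennreal_plus)
  also have "\<dots> = (\<integral>\<^sup>+ s. ennreal (indicator {0..x} s * K) \<partial>lborel)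
      + (\<integral>\<^sup>+ s. ennreal (indicator {x..} s * s powr q) \<partial>lborel)"
    by (simp add: nn_integral_add)
  also have "\<dots> = ennreal (K * x) + ennreal (- (x powr (q+1)) / (q+1))"
    using x K q by (simp add: int_const int_toinf)
  also have "\<dots> = ennreal (K * x + - (x powr (q+1)) / (q+1))"
  proof -
    have Z: "0 \<le> - (x powr (q+1)) / (q+1)" using q by (intro divide_nonpos_neg) auto
    show ?thesis using ennreal_plus[OF mult_nonneg_nonneg[OF K less_imp_le[OF x]] Z] by simp
  qed
  finally show ?thesis .
qed

lemma pw:
  fixes \<delta> s1 s2 t \<alpha> \<beta> a b c :: real and m :: nat
  assumes d: "\<delta> > 0" and s: "s1 \<ge> 0" "s2 \<ge> 0" "t \<ge> 0" and abc: "a \<ge> 0" "b \<ge> 0" "c \<ge> 0" "a + b + c = 2 + \<beta>"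
  shows "s1 powr \<alpha> * t ^ m / ((\<delta> + s1 + s2 + t\<^sup>2) powr (2 + \<beta>) * (\<delta> + s1 + s2 + t) ^ m)
     \<le> (s1 powr \<alpha> * (\<delta> + s1) powr (-a)) * (\<delta> + s2) powr (-b) * (\<delta> + t\<^sup>2) powr (-c)"
proof -
  define D where "D = \<delta> + s1 + s2 + t\<^sup>2"
  define E where "E = \<delta> + s1 + s2 + t"
  have Dp: "D > 0" "E > 0" using d s by (auto simp: D_def E_def intro!: add_pos_nonneg)
  have q: "t ^ m / E ^ m \<le> 1"
  proof -
    have "t ^ m \<le> E ^ m" using s d by (intro power_mono) (auto simp: E_def)
    then show ?thesis using Dp by simp
  qed
  have "s1 powr \<alpha> * t ^ m / ((\<delta> + s1 + s2 + t\<^sup>2) powr (2 + \<beta>) * (\<delta> + s1 + s2 + t) ^ m)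
      = s1 powr \<alpha> * t ^ m / (D powr (2 + \<beta>) * E ^ m)" by (simp only: D_def E_def)
  also have "\<dots> = s1 powr \<alpha> * (t ^ m / E ^ m) * D powr (-(2+\<beta>))"
    by (simp only: powr_minus[of D "2+\<beta>"] divide_inverse inverse_mult_distrib mult_ac)
  also have "\<dots> \<le> s1 powr \<alpha> * 1 * D powr (-(2+\<beta>))"
    using q by (intro mult_right_mono mult_left_mono) auto
  also have "D powr (-(2+\<beta>)) = D powr (-a) * D powr (-b) * D powr (-c)"
  proof -
    have "-(2+\<beta>) = -a + -b + -c" using abc by simp
    then show ?thesis by (simp only: powr_add)
  qed
  also have "s1 powr \<alpha> * 1 * (D powr (-a) * D powr (-b) * D powr (-c))
      \<le> s1 powr \<alpha> * ((\<delta> + s1) powr (-a) * (\<delta> + s2) powr (-b) * (\<delta> + t\<^sup>2) powr (-c))"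
  proof -
    have 1: "D powr (-a) \<le> (\<delta> + s1) powr (-a)" using abc d s by (intro powr_mono2') (auto simp: D_def)
    have 2: "D powr (-b) \<le> (\<delta> + s2) powr (-b)" using abc d s by (intro powr_mono2') (auto simp: D_def)
    have 3: "D powr (-c) \<le> (\<delta> + t\<^sup>2) powr (-c)" using abc d s by (intro powr_mono2') (auto simp: D_def intro!: add_pos_nonneg)
    show ?thesis by (simp, intro mult_left_mono mult_mono 1 2 3) auto
  qed
  also have "\<dots> = (s1 powr \<alpha> * (\<delta> + s1) powr (-a)) * (\<delta> + s2) powr (-b) * (\<delta> + t\<^sup>2) powr (-c)"
    by (simp only: mult.assoc)
  finally show ?thesis .
qed

lemma b1:
  fixes \<delta> s \<alpha> a :: real
  assumes d: "\<delta> > 0" and s: "s \<ge> 0" and a: "a \<ge> 0"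
  shows "s powr \<alpha> * (\<delta> + s) powr (-a) \<le> indicator {0..\<delta>} s * s powr \<alpha> * \<delta> powr (-a) + indicator {\<delta>..} s * s powr (\<alpha> - a)"
proof (cases "s \<le> \<delta>")
  case True
  have "(\<delta> + s) powr (-a) \<le> \<delta> powr (-a)" using d s a by (intro powr_mono2') auto
  then have h: "s powr \<alpha> * (\<delta> + s) powr (-a) \<le> s powr \<alpha> * \<delta> powr (-a)" by (intro mult_left_mono) auto
  have e: "indicator {0..\<delta>} s = (1::real)" using True s by simp
  have z: "0 \<le> indicator {\<delta>..} s * s powr (\<alpha> - a)" by simp
  show ?thesis unfolding e mult_1_left by (rule add_increasing2[OF z h])
next
  case False
  have "(\<delta> + s) powr (-a) \<le> s powr (-a)" using d s a False by (intro powr_mono2') auto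
  then have "s powr \<alpha> * (\<delta> + s) powr (-a) \<le> s powr \<alpha> * s powr (-a)" by (intro mult_left_mono) auto
  also have "\<dots> = s powr (\<alpha> - a)" by (simp only: powr_add[symmetric] diff_conv_add_uminus)
  finally have h: "s powr \<alpha> * (\<delta> + s) powr (-a) \<le> s powr (\<alpha> - a)" .
  have e1: "indicator {0..\<delta>} s = (0::real)" using False by simp
  have e2: "indicator {\<delta>..} s = (1::real)" using False by simp
  show ?thesis unfolding e1 e2 using h by simp
qed

lemma b2:
  fixes \<delta> s b :: real
  assumes d: "\<delta> > 0" and s: "s \<ge> 0" and b: "b \<ge> 0"
  shows "(\<delta> + s) powr (-b) \<le> indicator {0..\<delta>} s * \<delta> powr (-b) + indicator {\<delta>..} s * s powr (-b)"
proof (cases "s \<le> \<delta>")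
  case True
  have h: "(\<delta> + s) powr (-b) \<le> \<delta> powr (-b)" using d s b by (intro powr_mono2') auto
  have e: "indicator {0..\<delta>} s = (1::real)" using True s by simp
  have z: "0 \<le> indicator {\<delta>..} s * s powr (-b)" by simp
  show ?thesis unfolding e mult_1_left by (rule add_increasing2[OF z h])
next
  case False
  have h: "(\<delta> + s) powr (-b) \<le> s powr (-b)" using d s b False by (intro powr_mono2') auto
  have e1: "indicator {0..\<delta>} s = (0::real)" using False by simp
  have e2: "indicator {\<delta>..} s = (1::real)" using False by simp
  show ?thesis unfolding e1 e2 using h by simp
qed

lemma b3:
  fixes \<delta> t c :: real
  assumes d: "\<delta> > 0" and t: "t \<ge> 0" and c: "c \<ge> 0"
  shows "(\<delta> + t\<^sup>2) powr (-c) \<le> indicator {0..sqrt \<delta>} t * \<delta> powr (-c) + indicator {sqrt \<delta>..} t * t powr (-2*c)"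
proof (cases "t \<le> sqrt \<delta>")
  case True
  have h: "(\<delta> + t\<^sup>2) powr (-c) \<le> \<delta> powr (-c)" using d t c by (intro powr_mono2') auto
  have e: "indicator {0..sqrt \<delta>} t = (1::real)" using True t by simp
  have z: "0 \<le> indicator {sqrt \<delta>..} t * t powr (-2*c)" by simp
  show ?thesis unfolding e mult_1_left by (rule add_increasing2[OF z h])
next
  case False
  have "sqrt \<delta> \<ge> 0" using d by simp
  then have tp: "t > 0" using False by linarith
  have "(\<delta> + t\<^sup>2) powr (-c) \<le> (t\<^sup>2) powr (-c)" using d tp c by (intro powr_mono2') auto
  also have "(t\<^sup>2) powr (-c) = t powr (-2*c)"
  proof -
    have "t\<^sup>2 = t powr 2" using tp by (simp add: powr_realpow)
    then have "(t\<^sup>2) powr (-c) = t powr (2 * -c)" by (simp only: powr_powr)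
    then show ?thesis by simp
  qed
  finally have h: "(\<delta> + t\<^sup>2) powr (-c) \<le> t powr (-2*c)" .
  have e1: "indicator {0..sqrt \<delta>} t = (0::real)" using False d by simp
  have e2: "indicator {sqrt \<delta>..} t = (1::real)" using False d by simp
  show ?thesis unfolding e1 e2 using h by simp
qed

theorem lemma6p5:
  fixes n :: nat and \<alpha> \<beta> :: real
  assumes "n \<ge> 2" and "\<beta> \<ge> 0" and "\<alpha> > -1" and "\<alpha> < \<beta> - 1/2"
  shows "\<exists>C::real. \<forall>\<delta>::real. 0 < \<delta> \<and> \<delta> < 1/2 \<longrightarrow>
    (\<integral>\<^sup>+ x. indicator ({0..1} \<times> {0..1} \<times> {0..1}) x *
        ennreal (case x of (s\<^sub>1, s\<^sub>2, t) \<Rightarrow>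
          s\<^sub>1 powr \<alpha> * t ^ (2*n-3) /
          ((\<delta> + s\<^sub>1 + s\<^sub>2 + t\<^sup>2) powr (2 + \<beta>) * (\<delta> + s\<^sub>1 + s\<^sub>2 + t) ^ (2*n-3)))
      \<partial>(lborel :: (real \<times> real \<times> real) measure))
    \<le> ennreal (C * \<delta> powr (\<alpha> - \<beta> + 1/2))"
proof -
  define \<gamma> where "\<gamma> = \<beta> - 1/2 - \<alpha>"
  have g: "\<gamma> > 0" using assms by (simp add: \<gamma>_def)
  define e where "e = min \<gamma> (1/2) / 4"
  have e: "e > 0" "e \<le> \<gamma>/4" "e \<le> 1/8" using g by (auto simp: e_def min_def)
  define a where "a = \<beta> + 1/2 - 2*e"
  define b where "b = 1 + e"
  define c where "c = 1/2 + e"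
  have a0: "a \<ge> 0" using e assms by (simp add: a_def)
  have aa: "a - \<alpha> - 1 > 0" using e by (simp add: a_def \<gamma>_def)
  have b0: "b > 1" using e by (simp add: b_def)
  have c0: "c > 1/2" using e by (simp add: c_def)
  have abc: "a + b + c = 2 + \<beta>" by (simp add: a_def b_def c_def)
  define K1 where "K1 = 1/(\<alpha>+1) + 1/(a-\<alpha>-1)"
  define K2 where "K2 = 1 + 1/(b-1)"
  define K3 where "K3 = 1 + 1/(2*c-1)"
  show ?thesis
  proof (intro exI allI impI)
    fix \<delta> :: real assume "0 < \<delta> \<and> \<delta> < 1/2"
    then have d: "\<delta> > 0" by simp
    define g1 where "g1 = (\<lambda>s::real. indicator {0..\<delta>} s * s powr \<alpha> * \<delta> powr (-a) + indicator {\<delta>..} s * s powr (\<alpha> - a))"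
    define g2 where "g2 = (\<lambda>s::real. indicator {0..\<delta>} s * \<delta> powr (-b) + indicator {\<delta>..} s * s powr (-b))"
    define g3 where "g3 = (\<lambda>s::real. indicator {0..sqrt \<delta>} s * \<delta> powr (-c) + indicator {sqrt \<delta>..} s * s powr (-2*c))"
    have g1p: "g1 s \<ge> 0" for s by (simp add: g1_def)
    have g2p: "g2 s \<ge> 0" for s by (simp add: g2_def)
    have g3p: "g3 s \<ge> 0" for s by (simp add: g3_def)
    have [measurable]: "g1 \<in> borel_measurable borel" "g2 \<in> borel_measurable borel" "g3 \<in> borel_measurable borel"
      unfolding g1_def g2_def g3_def by measurable
    have step1: "(\<integral>\<^sup>+ x. indicator ({0..1} \<times> {0..1} \<times> {0..1}) x *
        ennreal (case x of (s\<^sub>1, s\<^sub>2, t) \<Rightarrow>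
          s\<^sub>1 powr \<alpha> * t ^ (2*n-3) /
          ((\<delta> + s\<^sub>1 + s\<^sub>2 + t\<^sup>2) powr (2 + \<beta>) * (\<delta> + s\<^sub>1 + s\<^sub>2 + t) ^ (2*n-3)))
      \<partial>(lborel :: (real \<times> real \<times> real) measure))
      \<le> (\<integral>\<^sup>+ x. (case x of (s1, s2, t) \<Rightarrow> ennreal (g1 s1) * ennreal (g2 s2) * ennreal (g3 t)) \<partial>(lborel :: (real \<times> real \<times> real) measure))"
    proof (intro nn_integral_mono)
      fix x :: "real \<times> real \<times> real"
      obtain s1 s2 t where x: "x = (s1, s2, t)" by (cases x) auto
      show "indicator ({0..1} \<times> {0..1} \<times> {0..1}) x *
        ennreal (case x of (s\<^sub>1, s\<^sub>2, t) \<Rightarrow>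
          s\<^sub>1 powr \<alpha> * t ^ (2*n-3) /
          ((\<delta> + s\<^sub>1 + s\<^sub>2 + t\<^sup>2) powr (2 + \<beta>) * (\<delta> + s\<^sub>1 + s\<^sub>2 + t) ^ (2*n-3)))
        \<le> (case x of (s1, s2, t) \<Rightarrow> ennreal (g1 s1) * ennreal (g2 s2) * ennreal (g3 t))"
      proof (cases "x \<in> {0..1} \<times> {0..1} \<times> {0..1}")
        case False
        then show ?thesis by simp
      next
        case True
        then have s: "s1 \<ge> 0" "s2 \<ge> 0" "t \<ge> 0" using x by auto
        have "s1 powr \<alpha> * t ^ (2*n-3) /
          ((\<delta> + s1 + s2 + t\<^sup>2) powr (2 + \<beta>) * (\<delta> + s1 + s2 + t) ^ (2*n-3))
          \<le> (s1 powr \<alpha> * (\<delta> + s1) powr (-a)) * (\<delta> + s2) powr (-b) * (\<delta> + t\<^sup>2) powr (-c)"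
          using pw[OF d s a0 _ _ abc] b0 c0 by simp
        also have "\<dots> \<le> g1 s1 * g2 s2 * g3 t"
        proof -
          have 1: "s1 powr \<alpha> * (\<delta> + s1) powr (-a) \<le> g1 s1" unfolding g1_def by (rule b1[OF d s(1) a0])
          have 2: "(\<delta> + s2) powr (-b) \<le> g2 s2" unfolding g2_def using b0 by (intro b2[OF d s(2)]) simp
          have 3: "(\<delta> + t\<^sup>2) powr (-c) \<le> g3 t" unfolding g3_def using c0 by (intro b3[OF d s(3)]) simp
          show ?thesis by (intro mult_mono 1 2 3 mult_nonneg_nonneg g1p g2p) auto
        qed
        finally have le: "s1 powr \<alpha> * t ^ (2*n-3) /
          ((\<delta> + s1 + s2 + t\<^sup>2) powr (2 + \<beta>) * (\<delta> + s1 + s2 + t) ^ (2*n-3)) \<le> g1 s1 * g2 s2 * g3 t" .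
        have "ennreal (s1 powr \<alpha> * t ^ (2*n-3) /
          ((\<delta> + s1 + s2 + t\<^sup>2) powr (2 + \<beta>) * (\<delta> + s1 + s2 + t) ^ (2*n-3))) \<le> ennreal (g1 s1 * g2 s2 * g3 t)"
          using le by (rule ennreal_leI)
        also have "\<dots> = ennreal (g1 s1) * ennreal (g2 s2) * ennreal (g3 t)"
          using g1p g2p g3p by (simp add: ennreal_mult)
        finally show ?thesis using True x by simp
      qed
    qed
    also have "\<dots> = (\<integral>\<^sup>+ s. ennreal (g1 s) \<partial>lborel) * (\<integral>\<^sup>+ s. ennreal (g2 s) \<partial>lborel) * (\<integral>\<^sup>+ s. ennreal (g3 s) \<partial>lborel)"
      by (rule prod3) measurable
    also have "(\<integral>\<^sup>+ s. ennreal (g1 s) \<partial>lborel) = ennreal (\<delta> powr (\<alpha> + 1 - a) * K1)"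
      unfolding g1_def K1_def by (rule I1[OF d assms(3) aa])
    also have "(\<integral>\<^sup>+ s. ennreal (g2 s) \<partial>lborel) = ennreal (\<delta> powr (-b) * \<delta> + - (\<delta> powr (-b+1)) / (-b+1))"
      unfolding g2_def using d b0 by (intro J) auto
    also have "(\<integral>\<^sup>+ s. ennreal (g3 s) \<partial>lborel) = ennreal (\<delta> powr (-c) * sqrt \<delta> + - (sqrt \<delta> powr (-2*c+1)) / (-2*c+1))"
      unfolding g3_def using d c0 by (intro J) auto
    also have "\<delta> powr (-b) * \<delta> + - (\<delta> powr (-b+1)) / (-b+1) = \<delta> powr (1 - b) * K2"
    proof -
      have "\<delta> powr (1 + -b) = \<delta> powr 1 * \<delta> powr (-b)" by (rule powr_add)
      then have "\<delta> powr (-b) * \<delta> = \<delta> powr (1 - b)" using d by simp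
      moreover have "-b+1 = -(b-1)" by simp
      ultimately show ?thesis using b0 by (simp add: K2_def divide_simps) (simp add: algebra_simps)
    qed
    also have "\<delta> powr (-c) * sqrt \<delta> + - (sqrt \<delta> powr (-2*c+1)) / (-2*c+1) = \<delta> powr (1/2 - c) * K3"
    proof -
      have sq: "sqrt \<delta> = \<delta> powr (1/2)" using d by (simp add: powr_half_sqrt)
      have "\<delta> powr (-c) * sqrt \<delta> = \<delta> powr (1/2 - c)" unfolding sq by (simp add: powr_add[symmetric])
      moreover have "sqrt \<delta> powr (-2*c+1) = \<delta> powr (1/2 - c)" unfolding sq by (simp add: powr_powr algebra_simps)
      moreover have "-2*c+1 = -(2*c-1)" by simp
      ultimately show ?thesis using c0 by (simp add: K3_def divide_simps) (simp add: algebra_simps)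
    qed
    also have "ennreal (\<delta> powr (\<alpha> + 1 - a) * K1) * ennreal (\<delta> powr (1 - b) * K2) * ennreal (\<delta> powr (1/2 - c) * K3)
       = ennreal (K1 * K2 * K3 * \<delta> powr (\<alpha> - \<beta> + 1/2))"
    proof -
      have K: "K1 \<ge> 0" "K2 \<ge> 0" "K3 \<ge> 0" using assms(3) aa b0 c0 by (auto simp: K1_def K2_def K3_def)
      have "\<delta> powr (\<alpha> + 1 - a) * \<delta> powr (1 - b) * \<delta> powr (1/2 - c) = \<delta> powr (\<alpha> - \<beta> + 1/2)"
      proof -
        have "\<alpha> - \<beta> + 1/2 = (\<alpha> + 1 - a) + (1 - b) + (1/2 - c)" using abc by simp
        then show ?thesis by (simp only: powr_add)
      qed
      then show ?thesis using K
        by (simp add: ennreal_mult[symmetric] mult_ac)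
    qed
    finally show "(\<integral>\<^sup>+ x. indicator ({0..1} \<times> {0..1} \<times> {0..1}) x *
        ennreal (case x of (s\<^sub>1, s\<^sub>2, t) \<Rightarrow>
          s\<^sub>1 powr \<alpha> * t ^ (2*n-3) /
          ((\<delta> + s\<^sub>1 + s\<^sub>2 + t\<^sup>2) powr (2 + \<beta>) * (\<delta> + s\<^sub>1 + s\<^sub>2 + t) ^ (2*n-3)))
      \<partial>(lborel :: (real \<times> real \<times> real) measure))
    \<le> ennreal (K1 * K2 * K3 * \<delta> powr (\<alpha> - \<beta> + 1/2))" .
  qed
qed

end
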